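(* Let $\alpha,\beta,\gamma,\delta\in\mathbb{R}$ with $\alpha+\delta\neq 0$ and $\alpha\gamma=0$, and let $G_7$ be the connected, simply connected Lie group whose Lie algebra $\mathfrak{g}_7$ has a basis $\{e_1,e_2,e_3\}$ with $[e_1,e_2]=-\alpha e_1-\beta e_2-\beta e_3$, $[e_1,e_3]=\alpha e_1+\beta e_2+\beta e_3$, $[e_2,e_3]=\gamma e_1+\delta e_2+\delta e_3$, equipped with the left-invariant Lorentzian metric $g$ for which $\{e_1,e_2,e_3\}$ is pseudo-orthonormal with $e_3$ timelike, and with the product structure $J$. Let $\lambda_0,c\in\mathbb{R}$. Then there exists a derivation $D$ of $\mathfrak{g}_7$ with $\widetilde{\mathrm{Ric}}^1=(s^1\lambda_0+c)\mathrm{Id}+D$ (i.e. $(G_7,g,J)$ is an algebraic Schouten soliton associated to the Kobayashi–Nomizu connection $\nabla^1$) if and only if $\alpha\neq0$, $\beta=\gamma=0$, $\delta=\frac12\alpha$ and $c=-\frac12\alpha^2+2\alpha^2\lambda_0$.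
   Context: Pseudo-orthonormal means $g(e_1,e_1)=g(e_2,e_2)=1$, $g(e_3,e_3)=-1$, $g(e_i,e_j)=0$ for $i\neq j$; left-invariant tensors are identified with their values on $\mathfrak{g}$. $\nabla$ is the Levi-Civita connection of $g$. The product structure $J$ is the left-invariant endomorphism with $Je_1=e_1$, $Je_2=e_2$, $Je_3=-e_3$. The canonical connection is $\nabla^0_XY=\nabla_XY-\frac12(\nabla_XJ)JY$, and the Kobayashi–Nomizu connection is $\nabla^1_XY=\nabla^0_XY-\frac14[(\nabla_YJ)JX-(\nabla_{JY}J)X]$. For $k=0,1$: $R^k(X,Y)Z=\nabla^k_X\nabla^k_YZ-\nabla^k_Y\nabla^k_XZ-\nabla^k_{[X,Y]}Z$; $\rho^k(X,Y)=-g(R^k(X,e_1)Y,e_1)-g(R^k(X,e_2)Y,e_2)+g(R^k(X,e_3)Y,e_3)$; $\widetilde\rho^k(X,Y)=\frac12(\rho^k(X,Y)+\rho^k(Y,X))$; $\widetilde{\mathrm{Ric}}^k$ is defined by $\widetilde\rho^k(X,Y)=g(\widetilde{\mathrm{Ric}}^k(X),Y)$; and $s^k=\widetilde\rho^k(e_1,e_1)+\widetilde\rho^k(e_2,e_2)-\widetilde\rho^k(e_3,e_3)$. A derivation of $\mathfrak{g}$ is a linear map $D$ with $D[X,Y]=[DX,Y]+[X,DY]$. $(G,g,J)$ is an algebraic Schouten soliton associated to $\nabla^k$ (with real constants $\lambda_0,c$) if $\widetilde{\mathrm{Ric}}^k=(s^k\lambda_0+c)\mathrm{Id}+D$ for some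 derivation $D$. *)

theory Defs
  imports "HOL-Analysis.Analysis"
begin

text \<open>Left-invariant objects on a 3-dimensional Lie group are identified with their
values on the Lie algebra, modelled as real^3 with basis e 1, e 2, e 3
(coordinates with respect to this basis).\<close>

type_synonym vec3 = "real^3"

definition e :: "3 \<Rightarrow> vec3" where
  "e k = axis k 1"

text \<open>signature (1,1,-1): g(e_k,e_k) = eps k\<close>
definition eps :: "3 \<Rightarrow> real" where
  "eps k = (if k = 3 then -1 else 1)"

definition gL :: "vec3 \<Rightarrow> vec3 \<Rightarrow> real" where
  "gL X Y = X$1 * Y$1 + X$2 * Y$2 - X$3 * Y$3"

text \<open>the vector V with g(V, e_k) = phi(e_k) for all k (index raising)\<close>
definition raise :: "(vec3 \<Rightarrow> real) \<Rightarrow> vec3" where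
  "raise \<phi> = (\<chi> k. eps k * \<phi> (e k))"

text \<open>Levi-Civita connection of a left-invariant metric, via the Koszul formula
  2 g(nabla_X Y, Z) = g([X,Y],Z) - g([Y,Z],X) + g([Z,X],Y)\<close>
definition LC :: "(vec3 \<Rightarrow> vec3 \<Rightarrow> vec3) \<Rightarrow> vec3 \<Rightarrow> vec3 \<Rightarrow> vec3" where
  "LC br X Y = raise (\<lambda>Z. (1/2) * (gL (br X Y) Z - gL (br Y Z) X + gL (br Z X) Y))"

definition Jp :: "vec3 \<Rightarrow> vec3" where
  "Jp X = (\<chi> k. eps k * X$k)"

definition nablaJ :: "(vec3 \<Rightarrow> vec3 \<Rightarrow> vec3) \<Rightarrow> vec3 \<Rightarrow> vec3 \<Rightarrow> vec3" where
  "nablaJ br X Y = LC br X (Jp Y) - Jp (LC br X Y)"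

definition nabla0 :: "(vec3 \<Rightarrow> vec3 \<Rightarrow> vec3) \<Rightarrow> vec3 \<Rightarrow> vec3 \<Rightarrow> vec3" where
  "nabla0 br X Y = LC br X Y - (1/2) *\<^sub>R nablaJ br X (Jp Y)"

definition nabla1 :: "(vec3 \<Rightarrow> vec3 \<Rightarrow> vec3) \<Rightarrow> vec3 \<Rightarrow> vec3 \<Rightarrow> vec3" where
  "nabla1 br X Y = nabla0 br X Y
      - (1/4) *\<^sub>R (nablaJ br Y (Jp X) - nablaJ br (Jp Y) X)"

definition curv :: "(vec3 \<Rightarrow> vec3 \<Rightarrow> vec3) \<Rightarrow> (vec3 \<Rightarrow> vec3 \<Rightarrow> vec3)
    \<Rightarrow> vec3 \<Rightarrow> vec3 \<Rightarrow> vec3 \<Rightarrow> vec3" where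
  "curv br nb X Y Z = nb X (nb Y Z) - nb Y (nb X Z) - nb (br X Y) Z"

definition ricci :: "(vec3 \<Rightarrow> vec3 \<Rightarrow> vec3) \<Rightarrow> (vec3 \<Rightarrow> vec3 \<Rightarrow> vec3)
    \<Rightarrow> vec3 \<Rightarrow> vec3 \<Rightarrow> real" where
  "ricci br nb X Y = - gL (curv br nb X (e 1) Y) (e 1) - gL (curv br nb X (e 2) Y) (e 2)
       + gL (curv br nb X (e 3) Y) (e 3)"

definition sym_ricci :: "(vec3 \<Rightarrow> vec3 \<Rightarrow> vec3) \<Rightarrow> (vec3 \<Rightarrow> vec3 \<Rightarrow> vec3)
    \<Rightarrow> vec3 \<Rightarrow> vec3 \<Rightarrow> real" where
  "sym_ricci br nb X Y = (1/2) * (ricci br nb X Y + ricci br nb Y X)"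

definition Ric_op :: "(vec3 \<Rightarrow> vec3 \<Rightarrow> vec3) \<Rightarrow> (vec3 \<Rightarrow> vec3 \<Rightarrow> vec3)
    \<Rightarrow> vec3 \<Rightarrow> vec3" where
  "Ric_op br nb X = raise (\<lambda>Y. sym_ricci br nb X Y)"

definition scal :: "(vec3 \<Rightarrow> vec3 \<Rightarrow> vec3) \<Rightarrow> (vec3 \<Rightarrow> vec3 \<Rightarrow> vec3) \<Rightarrow> real" where
  "scal br nb = sym_ricci br nb (e 1) (e 1) + sym_ricci br nb (e 2) (e 2)
       - sym_ricci br nb (e 3) (e 3)"

definition derivation :: "(vec3 \<Rightarrow> vec3 \<Rightarrow> vec3) \<Rightarrow> (vec3 \<Rightarrow> vec3) \<Rightarrow> bool" where
  "derivation br D \<longleftrightarrow> linear D \<and> (\<forall>X Y. D (br X Y) = br (D X) Y + br X (D Y))"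

definition alg_schouten_soliton :: "(vec3 \<Rightarrow> vec3 \<Rightarrow> vec3) \<Rightarrow> (vec3 \<Rightarrow> vec3 \<Rightarrow> vec3)
    \<Rightarrow> real \<Rightarrow> real \<Rightarrow> bool" where
  "alg_schouten_soliton br nb lam0 c \<longleftrightarrow>
     (\<exists>D. derivation br D \<and> (\<forall>X. Ric_op br nb X = (scal br nb * lam0 + c) *\<^sub>R X + D X))"

definition bracket_of :: "vec3 \<Rightarrow> vec3 \<Rightarrow> vec3 \<Rightarrow> vec3 \<Rightarrow> vec3 \<Rightarrow> vec3" where
  "bracket_of b12 b13 b23 X Y =
     (X$1 * Y$2 - X$2 * Y$1) *\<^sub>R b12 + (X$1 * Y$3 - X$3 * Y$1) *\<^sub>R b13
     + (X$2 * Y$3 - X$3 * Y$2) *\<^sub>R b23"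

definition br7 :: "real \<Rightarrow> real \<Rightarrow> real \<Rightarrow> real \<Rightarrow> vec3 \<Rightarrow> vec3 \<Rightarrow> vec3" where
  "br7 \<alpha> \<beta> \<gamma> \<delta> = bracket_of
      ((-\<alpha>) *\<^sub>R e 1 + (-\<beta>) *\<^sub>R e 2 + (-\<beta>) *\<^sub>R e 3)
      (\<alpha> *\<^sub>R e 1 + \<beta> *\<^sub>R e 2 + \<beta> *\<^sub>R e 3)
      (\<gamma> *\<^sub>R e 1 + \<delta> *\<^sub>R e 2 + \<delta> *\<^sub>R e 3)"

lemma e_distinct: "e 1 \<noteq> e 2" "e 1 \<noteq> e 3" "e 2 \<noteq> e 3"
  by (auto simp: e_def axis_eq_axis)

end

theory Submission imports Defs begin
lemma n1c:
  fixes a b g d :: real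
  shows "nabla1 (br7 a b g d) X Y $ 1 = - a * X$1*Y$2 - b*X$2*Y$2 - a*X$3*Y$1 - g*X$3*Y$2"
    and "nabla1 (br7 a b g d) X Y $ 2 = a*X$1*Y$1 + b*X$2*Y$1 - b*X$3*Y$1 - d*X$3*Y$2"
    and "nabla1 (br7 a b g d) X Y $ 3 = b*X$1*Y$3 + d*X$2*Y$3"
  by (simp_all add: nabla1_def nabla0_def nablaJ_def LC_def raise_def Jp_def gL_def br7_def
      bracket_of_def e_def eps_def axis_def algebra_simps)

lemma brc:
  fixes a b g d :: real
  shows "br7 a b g d X Y $ 1 = -a*(X$1*Y$2 - X$2*Y$1) + a*(X$1*Y$3 - X$3*Y$1) + g*(X$2*Y$3 - X$3*Y$2)"
    and "br7 a b g d X Y $ 2 = -b*(X$1*Y$2 - X$2*Y$1) + b*(X$1*Y$3 - X$3*Y$1) + d*(X$2*Y$3 - X$3*Y$2)"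
    and "br7 a b g d X Y $ 3 = -b*(X$1*Y$2 - X$2*Y$1) + b*(X$1*Y$3 - X$3*Y$1) + d*(X$2*Y$3 - X$3*Y$2)"
  by (simp_all add: br7_def bracket_of_def e_def axis_def algebra_simps)

lemma ec: "e 1 $ 1 = 1" "e 1 $ 2 = 0" "e 1 $ 3 = 0" "e 2 $ 1 = 0" "e 2 $ 2 = 1" "e 2 $ 3 = 0"
  "e 3 $ 1 = 0" "e 3 $ 2 = 0" "e 3 $ 3 = 1"
  by (simp_all add: e_def axis_def)

lemma ricc:
  fixes a b g d :: real
  shows "Ric_op (br7 a b g d) (nabla1 (br7 a b g d)) X $ 1 = -(a^2) * X$1 + (b*d/2 - a*b/2) * X$2 + (b*d+a*b) * X$3"
    and "Ric_op (br7 a b g d) (nabla1 (br7 a b g d)) X $ 2 = (b*d/2 - a*b/2) * X$1 + (-b*g - b^2 - a^2) * X$2 + (d^2 + b*g/2 + a*d/2) * X$3"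
    and "Ric_op (br7 a b g d) (nabla1 (br7 a b g d)) X $ 3 = (-b*d - a*b) * X$1 + (-(d^2) - b*g/2 - a*d/2) * X$2"
  by (simp_all add: Ric_op_def raise_def sym_ricci_def ricci_def curv_def gL_def n1c brc ec eps_def;
      simp add: algebra_simps power2_eq_square)+

lemma scalc:
  fixes a b g d :: real
  shows "scal (br7 a b g d) (nabla1 (br7 a b g d)) = -b*g - b^2 - 2*a^2"
proof -
  have "scal (br7 a b g d) (nabla1 (br7 a b g d)) = Ric_op (br7 a b g d) (nabla1 (br7 a b g d)) (e 1) $ 1
     + Ric_op (br7 a b g d) (nabla1 (br7 a b g d)) (e 2) $ 2 + Ric_op (br7 a b g d) (nabla1 (br7 a b g d)) (e 3) $ 3"
    by (simp add: scal_def Ric_op_def raise_def eps_def)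
  also have "... = -b*g - b^2 - 2*a^2" unfolding ricc by (simp add: ec)
  finally show ?thesis .
qed

lemma alg:
  fixes a b g d k :: real
  assumes ad: "a + d \<noteq> 0" and ag: "a * g = 0"
  and e121: "-(b*g*d) - 3/2*b^2*d - a*k + a*d^2 - 3/2*a*b*g - 3/2*a*b^2 + 1/2*a^2*d - a^3 = 0"
  and e122: "-(b*k) - b*d^2 - 3/2*a*b*d - 1/2*a^2*b = 0"
  and e123: "-(b*k) + b*d^2 - b^3 + a*b*d - a^2*b = 0"
  and e131: "-1/2*b*g*d + 3/2*b^2*d + a*k + a*d^2 + a*b*g + 1/2*a*b^2 + 1/2*a^2*d = 0"
  and e133: "b*k - 1/2*b*d^2 - 1/2*a*b*d = 0"
  and e232: "d*k + d^3 + b*g*d - 3/2*b^2*d + 1/2*a*d^2 - 1/2*a*b*g - 1/2*a*b^2 = 0"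
  and e233: "d*k - d^3 - 1/2*b*g*d - 1/2*b^2*d - 1/2*a*d^2 - a*b*g - 1/2*a*b^2 + a^2*d = 0"
  shows "a \<noteq> 0 \<and> b = 0 \<and> g = 0 \<and> d = a/2 \<and> k = -(a^2)/2"
proof (cases "b = 0")
  case True
  have s1: "a * ((2*d - a) * (d + a)) = 0" using e121 e131 True
    by (simp add: algebra_simps power2_eq_square power3_eq_cube)
  have a0: "a \<noteq> 0"
  proof
    assume a0: "a = 0"
    have "2 * d^3 = 0" using e232 e233 True a0 by simp
    then have "d = 0" by simp
    with a0 ad show False by simp
  qed
  have dd: "d = a/2" using s1 a0 ad by (simp add: add.commute)
  have g0: "g = 0" using ag a0 by simp
  have "a * (k + d^2 + a*d/2) = 0" using e131 True by (simp add: algebra_simps power2_eq_square)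
  then have "k = -(d^2) - a*d/2" using a0 by simp
  then have "k = -(a^2)/2" using dd by (simp add: power2_eq_square field_simps)
  with a0 True g0 dd show ?thesis by simp
next
  case False
  have k1: "k = -(d^2) - 3/2*a*d - 1/2*a^2"
  proof -
    have "b * (k + d^2 + 3/2*a*d + 1/2*a^2) = 0" using e122 by (simp add: algebra_simps power2_eq_square)
    with False show ?thesis by simp
  qed
  have k2: "k = 1/2*d^2 + 1/2*a*d"
  proof -
    have "b * (k - 1/2*d^2 - 1/2*a*d) = 0" using e133 by (simp add: algebra_simps power2_eq_square)
    with False show ?thesis by simp
  qed
  have k3: "k = d^2 - b^2 + a*d - a^2"
  proof -
    have "b * (k - d^2 + b^2 - a*d + a^2) = 0" using e123 by (simp add: algebra_simps power2_eq_square power3_eq_cube)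
    with False show ?thesis by simp
  qed
  have "(3*d + a) * (d + a) = 0" using k1 k2 by (simp add: algebra_simps power2_eq_square)
  then have a3: "a = -3*d" using ad by (simp add: add.commute add_eq_0_iff)
  have "b^2 + 10 * d^2 = 0" using k2 k3 a3 by (simp add: algebra_simps power2_eq_square)
  moreover have "b^2 \<ge> 0" "d^2 \<ge> 0" by simp_all
  ultimately have "b^2 = 0" by linarith
  with False show ?thesis by simp
qed


theorem theorem4p15:
  fixes \<alpha> \<beta> \<gamma> \<delta> lam0 c :: real
  assumes "\<alpha> + \<delta> \<noteq> 0" and "\<alpha> * \<gamma> = 0"
  shows "alg_schouten_soliton (br7 \<alpha> \<beta> \<gamma> \<delta>) (nabla1 (br7 \<alpha> \<beta> \<gamma> \<delta>)) lam0 c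
     \<longleftrightarrow> (\<alpha> \<noteq> 0 \<and> \<beta> = 0 \<and> \<gamma> = 0 \<and> \<delta> = \<alpha> / 2 \<and> c = - (1/2) * \<alpha>^2 + 2 * \<alpha>^2 * lam0)"
proof -
  define a where "a = \<alpha>"
  define b where "b = \<beta>"
  define g where "g = \<gamma>"
  define d where "d = \<delta>"
  define R where "R = Ric_op (br7 a b g d) (nabla1 (br7 a b g d))"
  define k where "k = scal (br7 a b g d) (nabla1 (br7 a b g d)) * lam0 + c"
  have ad: "a + d \<noteq> 0" and ag: "a * g = 0" using assms by (simp_all add: a_def d_def g_def)
  have sc: "scal (br7 a b g d) (nabla1 (br7 a b g d)) = -b*g - b^2 - 2*a^2" by (rule scalc)
  have "alg_schouten_soliton (br7 a b g d) (nabla1 (br7 a b g d)) lam0 c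
     \<longleftrightarrow> (a \<noteq> 0 \<and> b = 0 \<and> g = 0 \<and> d = a / 2 \<and> c = - (1/2) * a^2 + 2 * a^2 * lam0)"
  proof
    assume "alg_schouten_soliton (br7 a b g d) (nabla1 (br7 a b g d)) lam0 c"
    then obtain D where der: "derivation (br7 a b g d) D"
      and hR: "\<And>X. R X = k *\<^sub>R X + D X"
      unfolding alg_schouten_soliton_def R_def k_def by blast
    have DX: "\<And>X. D X = R X - k *\<^sub>R X" using hR by (metis add_diff_cancel_left')
    have H: "\<And>X Y. R (br7 a b g d X Y) - k *\<^sub>R br7 a b g d X Y
       = br7 a b g d (R X - k *\<^sub>R X) Y + br7 a b g d X (R Y - k *\<^sub>R Y)"
      using der unfolding derivation_def DX by blast
    note ricc' = ricc[of a b g d, folded R_def]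
    have "\<And>X Y. True" by simp
    have e121: "-(b*g*d) - 3/2*b^2*d - a*k + a*d^2 - 3/2*a*b*g - 3/2*a*b^2 + 1/2*a^2*d - a^3 = 0"
      using H[of "e 1" "e 2", THEN arg_cong[where f="\<lambda>v. v $ 1"]]
      by (simp add: ricc' brc ec algebra_simps power2_eq_square power3_eq_cube)
    have e122: "-(b*k) - b*d^2 - 3/2*a*b*d - 1/2*a^2*b = 0"
      using H[of "e 1" "e 2", THEN arg_cong[where f="\<lambda>v. v $ 2"]]
      by (simp add: ricc' brc ec algebra_simps power2_eq_square power3_eq_cube)
    have e123: "-(b*k) + b*d^2 - b^3 + a*b*d - a^2*b = 0"
      using H[of "e 1" "e 2", THEN arg_cong[where f="\<lambda>v. v $ 3"]]
      by (simp add: ricc' brc ec algebra_simps power2_eq_square power3_eq_cube)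
    have e131: "-1/2*b*g*d + 3/2*b^2*d + a*k + a*d^2 + a*b*g + 1/2*a*b^2 + 1/2*a^2*d = 0"
      using H[of "e 1" "e 3", THEN arg_cong[where f="\<lambda>v. v $ 1"]]
      by (simp add: ricc' brc ec algebra_simps power2_eq_square power3_eq_cube)
    have e133: "b*k - 1/2*b*d^2 - 1/2*a*b*d = 0"
      using H[of "e 1" "e 3", THEN arg_cong[where f="\<lambda>v. v $ 3"]]
      by (simp add: ricc' brc ec algebra_simps power2_eq_square power3_eq_cube)
    have e232: "d*k + d^3 + b*g*d - 3/2*b^2*d + 1/2*a*d^2 - 1/2*a*b*g - 1/2*a*b^2 = 0"
      using H[of "e 2" "e 3", THEN arg_cong[where f="\<lambda>v. v $ 2"]]
      by (simp add: ricc' brc ec algebra_simps power2_eq_square power3_eq_cube)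
    have e233: "d*k - d^3 - 1/2*b*g*d - 1/2*b^2*d - 1/2*a*d^2 - a*b*g - 1/2*a*b^2 + a^2*d = 0"
      using H[of "e 2" "e 3", THEN arg_cong[where f="\<lambda>v. v $ 3"]]
      by (simp add: ricc' brc ec algebra_simps power2_eq_square power3_eq_cube)

    have res: "a \<noteq> 0 \<and> b = 0 \<and> g = 0 \<and> d = a/2 \<and> k = -(a^2)/2"
      by (rule alg[OF ad ag e121 e122 e123 e131 e133 e232 e233])
    then have b0: "b = 0" and g0: "g = 0" and kk: "k = -(a^2)/2" by simp_all
    have "c = k + 2 * a^2 * lam0" using k_def sc b0 g0 by simp
    then have "c = - (1/2) * a^2 + 2 * a^2 * lam0" using kk by simp
    with res show "a \<noteq> 0 \<and> b = 0 \<and> g = 0 \<and> d = a / 2 \<and> c = - (1/2) * a^2 + 2 * a^2 * lam0" by simp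
  next
    assume cs: "a \<noteq> 0 \<and> b = 0 \<and> g = 0 \<and> d = a / 2 \<and> c = - (1/2) * a^2 + 2 * a^2 * lam0"
    have k2: "k = -(a^2)/2" using cs k_def sc by simp
    note ricc' = ricc[of a b g d, folded R_def]
    define D where "D = (\<lambda>X. R X - k *\<^sub>R X)"
    have lin: "linear D"
    proof (rule linearI)
      fix x y :: vec3 and r :: real
      show "D (x + y) = D x + D y"
        by (simp add: D_def vec_eq_iff forall_3 ricc' field_simps)
      show "D (r *\<^sub>R x) = r *\<^sub>R D x"
        by (simp add: D_def vec_eq_iff forall_3 ricc' field_simps)
    qed
    have "\<forall>X Y. D (br7 a b g d X Y) = br7 a b g d (D X) Y + br7 a b g d X (D Y)"
    proof -
      have b0: "b = 0" and g0: "g = 0" and dd: "d = a/2" using cs by simp_all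
      show ?thesis
        by (simp add: k2 b0 g0 dd D_def vec_eq_iff forall_3 ricc' brc field_simps power2_eq_square)
    qed
    with lin have "derivation (br7 a b g d) D" by (simp add: derivation_def)
    moreover have "\<forall>X. R X = k *\<^sub>R X + D X" by (simp add: D_def)
    ultimately show "alg_schouten_soliton (br7 a b g d) (nabla1 (br7 a b g d)) lam0 c"
      unfolding alg_schouten_soliton_def R_def k_def by blast
  qed
  then show ?thesis by (simp add: a_def b_def g_def d_def)
qed

end
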